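(* Let $N,M$ be positive integers, let $\mathscr{A}\subset\mathscr{M}(N,M)$ and $\mathscr{B}\subset\mathscr{M}(M,N)$ be finite sets of real matrices, and let $\|\cdot\|$ be a submultiplicative norm on $\mathscr{M}(N,N)$. Suppose there is a periodic sequence $\{\bar B_n\}_{n\ge1}$ with $\bar B_n\in\mathscr{B}$ such that $\|A_n\bar B_n\cdots A_1\bar B_1\|\to0$ as $n\to\infty$ for every sequence $\{A_n\}_{n\ge1}$ with $A_n\in\mathscr{A}$. Then there exist constants $C>0$ and $\lambda\in(0,1)$ such that \[ \|A_n\bar B_n\cdots A_1\bar B_1\|\le C\lambda^n,\qquad n=1,2,\ldots, \] for every sequence $\{A_n\in\mathscr{A}\}$.
   Context: $\mathscr{M}(p,q)$ denotes the space of $p\times q$ real matrices with the topology of elementwise convergence. A norm on $\mathscr{M}(N,N)$ is submultiplicative if $\|XY\|\le\|X\|\,\|Y\|$ for all $X,Y$. *)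

theory Defs
  imports "HOL-Analysis.Analysis"
begin

definition is_matrix_norm :: "(real^'n^'n \<Rightarrow> real) \<Rightarrow> bool" where
  "is_matrix_norm nrm \<longleftrightarrow>
     (\<forall>X. 0 \<le> nrm X) \<and> (\<forall>X. nrm X = 0 \<longleftrightarrow> X = 0) \<and>
     (\<forall>c X. nrm (c *\<^sub>R X) = \<bar>c\<bar> * nrm X) \<and>
     (\<forall>X Y. nrm (X + Y) \<le> nrm X + nrm Y)"

definition submultiplicative :: "(real^'n^'n \<Rightarrow> real) \<Rightarrow> bool" where
  "submultiplicative nrm \<longleftrightarrow> (\<forall>X Y. nrm (X ** Y) \<le> nrm X * nrm Y)"

text \<open>prodAB A B n = A_n B_n ... A_1 B_1 (sequences indexed from 1; empty product = identity).\<close>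
fun prodAB :: "(nat \<Rightarrow> real^'m^'n) \<Rightarrow> (nat \<Rightarrow> real^'n^'m) \<Rightarrow> nat \<Rightarrow> real^'n^'n" where
  "prodAB A B 0 = mat 1"
| "prodAB A B (Suc n) = (A (Suc n) ** B (Suc n)) ** prodAB A B n"

end

theory Submission
  imports Defs
begin

lemma prodAB_cong:
  "(\<And>k. 1 \<le> k \<Longrightarrow> k \<le> n \<Longrightarrow> A k = A' k) \<Longrightarrow> (\<And>k. 1 \<le> k \<Longrightarrow> k \<le> n \<Longrightarrow> B k = B' k)
   \<Longrightarrow> prodAB A B n = prodAB A' B' n"
  by (induction n) auto

lemma prodAB_add:
  "prodAB A B (n + m) = prodAB (\<lambda>k. A (k+m)) (\<lambda>k. B (k+m)) n ** prodAB A B m"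
  by (induction n) (simp_all add: matrix_mul_assoc)

lemma periodic_mult:
  assumes "\<forall>n\<ge>1. Bbar (n + p) = Bbar n" and "(n::nat) \<ge> 1"
  shows "Bbar (n + j*p) = Bbar n"
proof (induction j)
  case (Suc j)
  have "Bbar (n + Suc j * p) = Bbar ((n + j*p) + p)" by (simp add: algebra_simps)
  also have "\<dots> = Bbar (n + j*p)" using assms by simp
  finally show ?case using Suc by simp
qed simp

lemma prodAB_bound:
  fixes nrm :: "real^'n^'n \<Rightarrow> real"
  assumes sub: "\<And>X Y. nrm (X ** Y) \<le> nrm X * nrm Y"
    and nn: "\<And>X. 0 \<le> nrm X" and c0: "0 \<le> c"
    and b: "\<And>k. 1 \<le> k \<Longrightarrow> k \<le> n \<Longrightarrow> nrm (A k ** B k) \<le> c"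
  shows "nrm (prodAB A B n) \<le> nrm (mat 1) * c ^ n"
  using b
proof (induction n)
  case (Suc n)
  have "nrm (prodAB A B (Suc n)) \<le> nrm (A (Suc n) ** B (Suc n)) * nrm (prodAB A B n)"
    using sub by simp
  also have "\<dots> \<le> c * (nrm (mat 1) * c ^ n)"
    by (rule mult_mono) (use Suc nn c0 in auto)
  finally show ?case by (simp add: algebra_simps)
qed simp

lemma konig:
  fixes S :: "'a set" and Q :: "(nat \<Rightarrow> 'a) \<Rightarrow> nat \<Rightarrow> bool" and h :: "nat \<Rightarrow> nat"
  assumes fin: "finite S"
    and ex: "\<And>A. \<forall>n\<ge>1. A n \<in> S \<Longrightarrow> \<exists>j\<ge>1. Q A j"
    and loc: "\<And>A A' j. (\<forall>k. 1 \<le> k \<and> k \<le> h j \<longrightarrow> A k = A' k) \<Longrightarrow> Q A j = Q A' j"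
  shows "\<exists>L\<ge>1. \<forall>A. (\<forall>n\<ge>1. A n \<in> S) \<longrightarrow> (\<exists>j. 1 \<le> j \<and> j \<le> L \<and> Q A j)"
proof (rule ccontr)
  assume "\<not> ?thesis"
  hence H: "\<forall>L\<ge>1. \<exists>A. (\<forall>n\<ge>1. A n \<in> S) \<and> (\<forall>j. 1 \<le> j \<and> j \<le> L \<longrightarrow> \<not> Q A j)"
    by blast
  define ext where "ext m w \<longleftrightarrow> (\<forall>L. \<exists>A. (\<forall>n\<ge>1. A n \<in> S) \<and> (\<forall>k. 1 \<le> k \<and> k \<le> m \<longrightarrow> A k = w k)
      \<and> (\<forall>j. 1 \<le> j \<and> j \<le> L \<longrightarrow> \<not> Q A j))" for m w
  have ext0: "ext 0 w" for w
    unfolding ext_def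
  proof
    fix L :: nat
    from H[rule_format, of "max L 1"] obtain A where "\<forall>n\<ge>1. A n \<in> S"
      "\<forall>j. 1 \<le> j \<and> j \<le> max L 1 \<longrightarrow> \<not> Q A j" by auto
    thus "\<exists>A. (\<forall>n\<ge>1. A n \<in> S) \<and> (\<forall>k. 1 \<le> k \<and> k \<le> 0 \<longrightarrow> A k = w k) \<and> (\<forall>j. 1 \<le> j \<and> j \<le> L \<longrightarrow> \<not> Q A j)"
      by auto
  qed
  have step: "\<exists>a. a \<in> S \<and> ext (Suc m) (w(Suc m := a))" if e: "ext m w" for m w
  proof (rule ccontr)
    assume "\<not> ?thesis"
    hence na: "\<And>a. a \<in> S \<Longrightarrow> \<not> ext (Suc m) (w(Suc m := a))" by blast
    have "\<forall>a\<in>S. \<exists>L. \<not> (\<exists>A. (\<forall>n\<ge>1. A n \<in> S) \<and> (\<forall>k. 1 \<le> k \<and> k \<le> Suc m \<longrightarrow> A k = (w(Suc m := a)) k)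
      \<and> (\<forall>j. 1 \<le> j \<and> j \<le> L \<longrightarrow> \<not> Q A j))"
    proof
      fix a assume "a \<in> S"
      from na[OF this] show "\<exists>L. \<not> (\<exists>A. (\<forall>n\<ge>1. A n \<in> S) \<and> (\<forall>k. 1 \<le> k \<and> k \<le> Suc m \<longrightarrow> A k = (w(Suc m := a)) k)
      \<and> (\<forall>j. 1 \<le> j \<and> j \<le> L \<longrightarrow> \<not> Q A j))"
        unfolding ext_def by (simp only: not_all)
    qed
    from bchoice[OF this] obtain Lf where Lf: "\<forall>a\<in>S. \<not> (\<exists>A. (\<forall>n\<ge>1. A n \<in> S) \<and> (\<forall>k. 1 \<le> k \<and> k \<le> Suc m \<longrightarrow> A k = (w(Suc m := a)) k)
      \<and> (\<forall>j. 1 \<le> j \<and> j \<le> Lf a \<longrightarrow> \<not> Q A j))"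
      by (elim exE)
    define L where "L = (\<Sum>a\<in>S. Lf a)"
    from e have "\<exists>A. (\<forall>n\<ge>1. A n \<in> S) \<and> (\<forall>k. 1 \<le> k \<and> k \<le> m \<longrightarrow> A k = w k)
      \<and> (\<forall>j. 1 \<le> j \<and> j \<le> L \<longrightarrow> \<not> Q A j)" unfolding ext_def by (rule spec)
    then obtain A where A: "\<forall>n\<ge>1. A n \<in> S" "\<forall>k. 1 \<le> k \<and> k \<le> m \<longrightarrow> A k = w k"
      "\<forall>j. 1 \<le> j \<and> j \<le> L \<longrightarrow> \<not> Q A j"
      by (elim exE conjE)
    define a where "a = A (Suc m)"
    have aS: "a \<in> S" using A(1) unfolding a_def by simp
    have "Lf a \<le> L" unfolding L_def by (rule member_le_sum[OF aS _ fin]) simp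
    hence c1: "\<forall>j. 1 \<le> j \<and> j \<le> Lf a \<longrightarrow> \<not> Q A j" using A(3) by (meson order_trans)
    have c2: "\<forall>k. 1 \<le> k \<and> k \<le> Suc m \<longrightarrow> A k = (w(Suc m := a)) k"
    proof (intro allI impI)
      fix k assume k: "1 \<le> k \<and> k \<le> Suc m"
      show "A k = (w(Suc m := a)) k"
      proof (cases "k = Suc m")
        case True then show ?thesis unfolding a_def by simp
      next
        case False then have "k \<le> m" using k by simp
        then show ?thesis using A(2) k False by simp
      qed
    qed
    have "\<exists>A. (\<forall>n\<ge>1. A n \<in> S) \<and> (\<forall>k. 1 \<le> k \<and> k \<le> Suc m \<longrightarrow> A k = (w(Suc m := a)) k)
      \<and> (\<forall>j. 1 \<le> j \<and> j \<le> Lf a \<longrightarrow> \<not> Q A j)" using A(1) c1 c2 by blast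
    thus False using Lf aS by blast
  qed
  fix w0 :: "nat \<Rightarrow> 'a"
  define W where "W = rec_nat w0 (\<lambda>m v. v(Suc m := SOME a. a \<in> S \<and> ext (Suc m) (v(Suc m := a))))"
  have W0: "W 0 = w0" and WS: "W (Suc m) = (W m)(Suc m := SOME a. a \<in> S \<and> ext (Suc m) ((W m)(Suc m := a)))" for m
    unfolding W_def by simp_all
  have Wext: "ext m (W m) \<and> (m \<ge> 1 \<longrightarrow> W m m \<in> S)" for m
  proof (induction m)
    case 0 then show ?case using ext0 W0 by simp
  next
    case (Suc m)
    have "\<exists>a. a \<in> S \<and> ext (Suc m) ((W m)(Suc m := a))" using step Suc by blast
    define a where "a = (SOME a. a \<in> S \<and> ext (Suc m) ((W m)(Suc m := a)))"
    have a: "a \<in> S \<and> ext (Suc m) ((W m)(Suc m := a))" unfolding a_def by (rule someI_ex) fact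
    have "W (Suc m) = (W m)(Suc m := a)" using WS[of m] unfolding a_def .
    then show ?case using a by (metis fun_upd_same)
  qed
  have Wagree: "W m k = W k k" if "1 \<le> k" "k \<le> m" for m k
    using that
  proof (induction m)
    case (Suc m)
    show ?case
    proof (cases "k = Suc m")
      case False
      have "W (Suc m) k = W m k" unfolding WS using False by (rule fun_upd_other)
      also have "\<dots> = W k k" using Suc False by simp
      finally show ?thesis .
    qed simp
  qed simp
  define A where "A = (\<lambda>n. W n n)"
  have AS: "\<forall>n\<ge>1. A n \<in> S" unfolding A_def using Wext by blast
  then obtain j where j: "j \<ge> 1" "Q A j" using ex by blast
  from Wext[of "h j"] obtain A' where A': "\<forall>k. 1 \<le> k \<and> k \<le> h j \<longrightarrow> A' k = W (h j) k"
    "\<forall>j'. 1 \<le> j' \<and> j' \<le> j \<longrightarrow> \<not> Q A' j'"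
    unfolding ext_def by blast
  have "\<forall>k. 1 \<le> k \<and> k \<le> h j \<longrightarrow> A k = A' k"
  proof (intro allI impI)
    fix k assume k: "1 \<le> k \<and> k \<le> h j"
    then show "A k = A' k" using A'(1) Wagree[of k "h j"] unfolding A_def by simp
  qed
  hence "Q A j = Q A' j" by (rule loc)
  thus False using A'(2) j by blast
qed

theorem theorem2:
  fixes \<A> :: "(real^'m^'n) set" and \<B> :: "(real^'n^'m) set"
    and nrm :: "real^'n^'n \<Rightarrow> real"
    and Bbar :: "nat \<Rightarrow> real^'n^'m"
  assumes "finite \<A>" and "finite \<B>"
    and "is_matrix_norm nrm" and "submultiplicative nrm"
    and "\<forall>n\<ge>1. Bbar n \<in> \<B>"
    and "\<exists>p>0. \<forall>n\<ge>1. Bbar (n + p) = Bbar n"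
    and "\<forall>A. (\<forall>n\<ge>1. A n \<in> \<A>) \<longrightarrow> (\<lambda>n. nrm (prodAB A Bbar n)) \<longlonglongrightarrow> 0"
  shows "\<exists>C>0. \<exists>lam. 0 < lam \<and> lam < 1 \<and>
           (\<forall>A. (\<forall>n\<ge>1. A n \<in> \<A>) \<longrightarrow> (\<forall>n\<ge>1. nrm (prodAB A Bbar n) \<le> C * lam ^ n))"
proof -
  obtain p where p: "p > 0" "\<forall>n\<ge>1. Bbar (n + p) = Bbar n" using assms(6) by blast
  have nn: "\<And>X. 0 \<le> nrm X" using assms(3) unfolding is_matrix_norm_def by blast
  have sub: "\<And>X Y. nrm (X ** Y) \<le> nrm X * nrm Y" using assms(4) unfolding submultiplicative_def by blast
  define c where "c = 1 + (\<Sum>a\<in>\<A>. \<Sum>b\<in>\<B>. nrm (a ** b))"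
  have c: "nrm (a ** b) \<le> c" if "a \<in> \<A>" "b \<in> \<B>" for a b
  proof -
    have "nrm (a ** b) \<le> (\<Sum>b\<in>\<B>. nrm (a ** b))"
      using that assms(2) nn by (intro member_le_sum) auto
    also have "\<dots> \<le> (\<Sum>a\<in>\<A>. \<Sum>b\<in>\<B>. nrm (a ** b))"
      using that assms(1) nn by (intro member_le_sum[where f="\<lambda>a. \<Sum>b\<in>\<B>. nrm (a ** b)"]) (auto intro: sum_nonneg)
    finally show ?thesis unfolding c_def by simp
  qed
  have c1: "1 \<le> c" unfolding c_def using nn by (simp add: sum_nonneg)
  have "\<exists>L\<ge>1. \<forall>A. (\<forall>n\<ge>1. A n \<in> \<A>) \<longrightarrow> (\<exists>j. 1 \<le> j \<and> j \<le> L \<and> nrm (prodAB A Bbar (j*p)) < 1/2)"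
  proof (rule konig[where h="\<lambda>j. j*p"])
    show "finite \<A>" by fact
  next
    fix A :: "nat \<Rightarrow> real^'m^'n" assume "\<forall>n\<ge>1. A n \<in> \<A>"
    hence "(\<lambda>n. nrm (prodAB A Bbar n)) \<longlonglongrightarrow> 0" using assms(7) by blast
    hence "eventually (\<lambda>n. nrm (prodAB A Bbar n) < 1/2) sequentially"
      by (rule order_tendstoD) simp
    then obtain N where N: "\<And>n. n \<ge> N \<Longrightarrow> nrm (prodAB A Bbar n) < 1/2"
      unfolding eventually_sequentially by blast
    have "N \<le> (N+1) * 1" by simp
    also have "\<dots> \<le> (N+1) * p" using p(1) by (intro mult_le_mono2) simp
    finally have "(N+1) * p \<ge> N" .
    thus "\<exists>j\<ge>1. nrm (prodAB A Bbar (j*p)) < 1/2" using N by (intro exI[of _ "N+1"]) auto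
  next
    fix A A' :: "nat \<Rightarrow> real^'m^'n" and j
    assume "\<forall>k. 1 \<le> k \<and> k \<le> j*p \<longrightarrow> A k = A' k"
    hence "prodAB A Bbar (j*p) = prodAB A' Bbar (j*p)" by (intro prodAB_cong) auto
    thus "(nrm (prodAB A Bbar (j*p)) < 1/2) = (nrm (prodAB A' Bbar (j*p)) < 1/2)" by simp
  qed
  then obtain L where L1: "L \<ge> 1" and L: "\<And>A. \<forall>n\<ge>1. A n \<in> \<A> \<Longrightarrow> \<exists>j. 1 \<le> j \<and> j \<le> L \<and> nrm (prodAB A Bbar (j*p)) < 1/2"
    by blast
  define K where "K = L * p"
  have K0: "K > 0" using L1 p(1) K_def by simp
  define lam where "lam = root K (1/2)"
  have lam0: "0 < lam" and lam1: "lam < 1" unfolding lam_def using K0 by auto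
  have lamK: "lam ^ K = 1/2" unfolding lam_def using K0 by (simp add: real_root_pow_pos2)
  define D where "D = 2 * (nrm (mat 1) + 1) * c ^ K"
  have D0: "D > 0" unfolding D_def using nn c1 by (simp add: add_nonneg_pos)
  have main: "\<forall>A. (\<forall>k\<ge>1. A k \<in> \<A>) \<longrightarrow> nrm (prodAB A Bbar n) \<le> D * lam ^ n" for n
  proof (induction n rule: less_induct)
    case (less n)
    show ?case
    proof (intro allI impI)
      fix A :: "nat \<Rightarrow> real^'m^'n" assume A: "\<forall>k\<ge>1. A k \<in> \<A>"
      show "nrm (prodAB A Bbar n) \<le> D * lam ^ n"
      proof (cases "n \<le> K")
        case True
        have "nrm (prodAB A Bbar n) \<le> nrm (mat 1) * c ^ n"
        proof (rule prodAB_bound[OF sub nn])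
          show "0 \<le> c" using c1 by simp
          fix k :: nat assume "1 \<le> k" "k \<le> n"
          then show "nrm (A k ** Bbar k) \<le> c" using A assms(5) c by blast
        qed
        also have "\<dots> \<le> (nrm (mat 1) + 1) * c ^ K"
          using c1 True nn by (intro mult_mono power_increasing) auto
        also have "\<dots> = D * lam ^ K" unfolding D_def lamK by simp
        also have "\<dots> \<le> D * lam ^ n"
          using D0 lam0 lam1 True by (intro mult_left_mono power_decreasing) auto
        finally show ?thesis .
      next
        case False
        obtain j where j: "1 \<le> j" "j \<le> L" "nrm (prodAB A Bbar (j*p)) < 1/2" using L[OF A] by blast
        define m where "m = j * p"
        have mK: "m \<le> K" unfolding m_def K_def using j by simp
        have m1: "m \<ge> 1" unfolding m_def using j p(1) by simp
        have nm: "n = (n - m) + m" using mK False by simp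
        have eq: "prodAB A Bbar n = prodAB (\<lambda>k. A (k+m)) Bbar (n-m) ** prodAB A Bbar m"
        proof -
          have e1: "prodAB A Bbar ((n - m) + m) = prodAB (\<lambda>k. A (k+m)) (\<lambda>k. Bbar (k+m)) (n-m) ** prodAB A Bbar m"
            by (rule prodAB_add)
          have e2: "prodAB (\<lambda>k. A (k+m)) (\<lambda>k. Bbar (k+m)) (n-m) = prodAB (\<lambda>k. A (k+m)) Bbar (n-m)"
          proof (rule prodAB_cong)
            fix k :: nat assume k: "1 \<le> k" "k \<le> n - m"
            show "Bbar (k+m) = Bbar k" unfolding m_def by (rule periodic_mult[OF p(2) k(1)])
          qed simp
          from e1 e2 show ?thesis by (simp only: nm[symmetric])
        qed
        have A': "\<forall>k\<ge>1. A (k+m) \<in> \<A>"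
        proof (intro allI impI)
          fix k :: nat assume "1 \<le> k"
          then have "1 \<le> k + m" by simp
          then show "A (k+m) \<in> \<A>" using A by blast
        qed
        have nlt: "n - m < n" using m1 mK False by simp
        from less[OF nlt, THEN spec[of _ "\<lambda>k. A (k+m)"]] A'
        have IH: "nrm (prodAB (\<lambda>k. A (k+m)) Bbar (n-m)) \<le> D * lam ^ (n-m)"
          by (rule mp)
        have "nrm (prodAB A Bbar n) \<le> nrm (prodAB (\<lambda>k. A (k+m)) Bbar (n-m)) * nrm (prodAB A Bbar m)"
          unfolding eq by (rule sub)
        also have "\<dots> \<le> (D * lam ^ (n-m)) * lam ^ m"
        proof (rule mult_mono)
          have "1/2 = lam ^ K" using lamK by simp
          also have "\<dots> \<le> lam ^ m" using lam0 lam1 mK by (intro power_decreasing) auto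
          finally show "nrm (prodAB A Bbar m) \<le> lam ^ m" using j(3) m_def by simp
          show "nrm (prodAB (\<lambda>k. A (k+m)) Bbar (n-m)) \<le> D * lam ^ (n-m)" by (rule IH)
          show "0 \<le> D * lam ^ (n-m)" using D0 lam0 by simp
          show "0 \<le> nrm (prodAB A Bbar m)" by (rule nn)
        qed
        also have "\<dots> = D * lam ^ ((n-m) + m)" by (simp add: power_add mult.assoc)
        also have "\<dots> = D * lam ^ n" by (simp only: nm[symmetric])
        finally show ?thesis .
      qed
    qed
  qed
  show ?thesis using D0 lam0 lam1 main by blast
qed

end
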